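(* Let $d_1,d_2\in\mathbb{Z}$ with $d_1(d_2-d_1)>0$. If $f\in\mathcal{E}_{d_1}$ satisfies $d_1(f\wedge\dot f)\ge0$ a.e. on $\mathbb{S}^1$, then $\int_{\mathbb{S}^1}|\dot f-\dot g|\ge2\pi|d_1-d_2|$ for all $g\in\mathcal{E}_{d_2}$. If moreover $d_1(f\wedge\dot f)>0$ a.e. on $\mathbb{S}^1$, then $\int_{\mathbb{S}^1}|\dot f-\dot g|>2\pi|d_1-d_2|$ for all $g\in\mathcal{E}_{d_2}$.
   Context: $W^{1,1}(\mathbb{S}^1;\mathbb{S}^1)=\{f\in W^{1,1}(\mathbb{S}^1;\mathbb{R}^2):|f|=1\}$; $\dot f$ is the arclength derivative; $\mathcal{E}_d=\{f\in W^{1,1}(\mathbb{S}^1;\mathbb{S}^1):\deg f=d\}$; for $f=(f_1,f_2)$, $f\wedge\dot f=f_1\dot f_2-f_2\dot f_1$. *)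

theory Defs
  imports "HOL-Complex_Analysis.Complex_Analysis"
begin

text \<open>Maps S^1 -> S^1 are functions on complex numbers; S^1 is parametrised by
  theta |-> cis theta, theta in [0, 2 pi].  The arclength derivative of f is a function
  df :: real => complex of theta.  f is in W^{1,1}(S^1;S^1) with weak arclength derivative df
  iff |f| = 1 on S^1, df is integrable on [0,2pi] and theta |-> f(cis theta) is the
  primitive of df (absolute continuity).\<close>

definition W11_S1 :: "(complex \<Rightarrow> complex) \<Rightarrow> (real \<Rightarrow> complex) \<Rightarrow> bool" where
  "W11_S1 f df \<longleftrightarrow>
     (\<forall>z. cmod z = 1 \<longrightarrow> cmod (f z) = 1) \<and>
     df absolutely_integrable_on {0..2*pi} \<and>
     (\<forall>t\<in>{0..2*pi}. f (cis t) = f 1 + integral {0..t} df)"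

definition deg :: "(complex \<Rightarrow> complex) \<Rightarrow> complex" where
  "deg f = winding_number (\<lambda>t. f (cis (2*pi*t))) 0"

text \<open>f wedge fdot at theta: f1 fdot2 - f2 fdot1 = Im (conj f * fdot).\<close>
definition wedge :: "(complex \<Rightarrow> complex) \<Rightarrow> (real \<Rightarrow> complex) \<Rightarrow> real \<Rightarrow> real" where
  "wedge f df t = Im (cnj (f (cis t)) * df t)"

end

theory Submission
  imports Defs
begin

lemma exp_quad:
  fixes z :: complex
  assumes "norm z \<le> 1/2"
  shows "norm (exp z - 1 - z) \<le> norm z ^ 2"
proof (cases "z = 0")
  case False
  have sums: "(\<lambda>k. z ^ (k + 2) /\<^sub>R fact (k + 2)) sums (exp z - (\<Sum>k<2. z ^ k /\<^sub>R fact k))"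
    by (intro sums_split_initial_segment exp_converges)
  have "summable (\<lambda>k. norm z ^ (k + 2) /\<^sub>R fact (k + 2))"
    using summable_norm_exp[of z]
    by (intro summable_norm summable_ignore_initial_segment)
       (auto simp: norm_power norm_divide divide_simps)
  also have "?this \<longleftrightarrow> summable (\<lambda>k. norm z ^ 2 * (norm z ^ k / fact (k +2)))"
    by (simp add: power_add mult_ac divide_simps power2_eq_square del: of_nat_Suc of_nat_add)
  also have "\<dots> \<longleftrightarrow> summable (\<lambda>k. norm z ^ k / fact (k + 2))"
    by (subst summable_cmult_iff) (use \<open>z \<noteq> 0\<close> in auto)
  finally have summable: "summable (\<lambda>k. norm z ^ k / fact (k + 2))" .
  have "exp z - 1 - z = (\<Sum>k. z ^ (k + 2) / fact (k + 2))"
    using sums by (simp add: sums_iff scaleR_conv_of_real divide_simps eval_nat_numeral)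
  also have "norm \<dots> \<le> (\<Sum>k. norm (z ^ (k + 2) / fact (k + 2)))"
    using summable_norm_exp[of z]
    by (intro summable_norm summable_ignore_initial_segment)
       (auto simp: norm_power norm_divide divide_simps)
  also have "\<dots> = (\<Sum>k. norm z ^ 2 * (norm z ^ k / fact (k + 2)))"
    by (simp add: power_add norm_power norm_divide mult_ac norm_mult power2_eq_square del: of_nat_Suc)
  also have "\<dots> = norm z ^ 2 * (\<Sum>k. norm z ^ k / fact (k + 2))"
    using summable by (rule suminf_mult)
  also have "\<dots> \<le> norm z ^ 2 * (1 / (1 - norm z) / 2)"
  proof (intro mult_left_mono, rule sums_le)
    show "(\<lambda>k. norm z ^ k / fact (k + 2)) sums (\<Sum>k. norm z ^ k / fact (k + 2))"
      using summable by blast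
    show "(\<lambda>k. norm z ^ k / 2) sums (1 / (1 - norm z) / 2)"
      using assms by (intro geometric_sums sums_divide) auto
  next
    fix k :: nat
    have "norm z ^ k / fact (k + 2) \<le> norm z ^ k / fact 2"
      by (intro divide_left_mono fact_mono) auto
    thus "norm z ^ k / fact (k + 2) \<le> norm z ^ k / 2"
      by simp
  qed (auto simp: divide_simps)
  also have "\<dots> \<le> norm z ^ 2"
  proof -
    have "1 / (1 - norm z) / 2 \<le> 1" using assms by (simp add: field_simps)
    then show ?thesis by (rule mult_left_le) auto
  qed
  finally show ?thesis .
qed auto

lemma pointwise_term:
  fixes Gu Gv Gt qu qv qt :: complex and eta :: real
  assumes "Gu = exp qu" "Gv = exp qv" "Gt = exp qt" "Re qt = 0"
    and "norm (qv - qt) \<le> eta" "norm (qu - qt) \<le> eta" "eta \<le> 1/2"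
  shows "norm (cnj Gt * (Gv - Gu) - (qv - qu)) \<le> 2 * eta * (norm (Gv - Gt) + norm (Gt - Gu))"
proof -
  define w1 where "w1 = qv - qt"
  define w2 where "w2 = qu - qt"
  have cq: "cnj qt = - qt" using assms(4) by (simp add: complex_eq_iff)
  have cG: "cnj Gt = exp (- qt)" using assms(3) cq by (simp add: exp_cnj)
  have e1: "cnj Gt * Gv = exp w1" unfolding w1_def cG assms(2) by (simp add: exp_diff exp_minus field_simps)
  have e2: "cnj Gt * Gu = exp w2" unfolding w2_def cG assms(1) by (simp add: exp_diff exp_minus field_simps)
  have nG: "norm (cnj Gt) = 1" using assms(3,4) by (simp add: norm_exp_eq_Re)
  have n1: "norm (Gv - Gt) = norm (exp w1 - 1)"
  proof -
    have "norm (Gv - Gt) = norm (cnj Gt * (Gv - Gt))" using nG by (simp add: norm_mult)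
    also have "cnj Gt * (Gv - Gt) = exp w1 - 1"
      using e1 cG assms(3) by (simp add: algebra_simps exp_minus field_simps)
    finally show ?thesis .
  qed
  have n2: "norm (Gt - Gu) = norm (exp w2 - 1)"
  proof -
    have "norm (Gt - Gu) = norm (cnj Gt * (Gu - Gt))" using nG by (simp add: norm_mult norm_minus_commute)
    also have "cnj Gt * (Gu - Gt) = exp w2 - 1"
      using e2 cG assms(3) by (simp add: algebra_simps exp_minus field_simps)
    finally show ?thesis .
  qed
  have w1b: "norm w1 \<le> 1/2" "norm w2 \<le> 1/2" using assms w1_def w2_def by auto
  have "cnj Gt * (Gv - Gu) - (qv - qu) = (exp w1 - 1 - w1) - (exp w2 - 1 - w2)"
    using e1 e2 by (simp add: w1_def w2_def algebra_simps)
  also have "norm \<dots> \<le> norm (exp w1 - 1 - w1) + norm (exp w2 - 1 - w2)" by (rule norm_triangle_ineq4)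
  also have "\<dots> \<le> norm w1 ^ 2 + norm w2 ^ 2" using exp_quad w1b by (meson add_mono)
  also have "\<dots> \<le> eta * norm w1 + eta * norm w2"
    using assms(5,6) unfolding w1_def w2_def power2_eq_square
    by (intro add_mono mult_right_mono) auto
  also have "\<dots> \<le> eta * (2 * norm (exp w1 - 1)) + eta * (2 * norm (exp w2 - 1))"
  proof -
    have "eta \<ge> 0" using assms(5) norm_ge_zero order_trans by blast
    moreover have "norm w1 \<le> 2 * norm (exp w1 - 1)" "norm w2 \<le> 2 * norm (exp w2 - 1)"
      using norm_exp_bounds(1)[OF w1b(1)] norm_exp_bounds(1)[OF w1b(2)] by auto
    ultimately show ?thesis by (intro add_mono mult_left_mono) auto
  qed
  finally show ?thesis using n1 n2 by (simp add: algebra_simps)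
qed



lemma Gdiff:
  fixes G phi :: "real \<Rightarrow> complex"
  assumes phi: "phi integrable_on {a..b}"
    and Gi: "\<And>t. t\<in>{a..b} \<Longrightarrow> G t = G a + integral {a..t} phi"
    and "a \<le> u" "u \<le> v" "v \<le> b"
  shows "G v - G u = integral {u..v} phi"
proof -
  have "phi integrable_on {a..v}" by (rule integrable_on_subinterval[OF phi]) (use assms in auto)
  then have "integral {a..u} phi + integral {u..v} phi = integral {a..v} phi"
    using assms(3-5) Henstock_Kurzweil_Integration.integral_combine[where a=a and c=u and b=v and f=phi] by blast
  moreover have "G v = G a + integral {a..v} phi" "G u = G a + integral {a..u} phi"
    using assms(3-5) by (auto intro!: Gi)
  ultimately show ?thesis by (simp add: algebra_simps)
qed

lemma Gdiff_norm:
  fixes G phi :: "real \<Rightarrow> complex"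
  assumes phi: "phi absolutely_integrable_on {a..b}"
    and Gi: "\<And>t. t\<in>{a..b} \<Longrightarrow> G t = G a + integral {a..t} phi"
    and "a \<le> u" "u \<le> v" "v \<le> b"
  shows "norm (G v - G u) \<le> integral {u..v} (\<lambda>s. norm (phi s))"
proof -
  have pI: "phi integrable_on {a..b}" "(\<lambda>s. norm (phi s)) integrable_on {a..b}"
    using phi by (auto simp: absolutely_integrable_on_def)
  have "phi integrable_on {u..v}" "(\<lambda>s. norm (phi s)) integrable_on {u..v}"
    using pI assms by (auto intro: integrable_on_subinterval)
  then have "norm (integral {u..v} phi) \<le> integral {u..v} (\<lambda>s. norm (phi s))"
    by (intro integral_norm_bound_integral) auto
  then show ?thesis using Gdiff[OF pI(1) Gi assms(3-5)] by simp
qed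

lemma ReQ0:
  fixes q :: complex assumes "norm (exp q) = 1" shows "Re q = 0"
  using assms by (simp add: norm_exp_eq_Re)

lemma term_bound:
  fixes G phi Q :: "real \<Rightarrow> complex"
  assumes phi: "phi absolutely_integrable_on {a..b}"
    and Gi: "\<And>t. t\<in>{a..b} \<Longrightarrow> G t = G a + integral {a..t} phi"
    and Ge: "\<And>t. t\<in>{a..b} \<Longrightarrow> G t = exp (Q t)"
    and Gn: "\<And>t. t\<in>{a..b} \<Longrightarrow> norm (G t) = 1"
    and uv: "a \<le> u" "u \<le> t" "t \<le> v" "v \<le> b"
    and qb: "norm (Q v - Q t) \<le> eta" "norm (Q u - Q t) \<le> eta" "eta \<le> 1/2"
  shows "norm (cnj (G t) * integral {u..v} phi - (Q v - Q u)) \<le> 2 * eta * integral {u..v} (\<lambda>s. norm (phi s))"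
proof -
  have pI: "phi integrable_on {a..b}" "(\<lambda>s. norm (phi s)) integrable_on {a..b}"
    using phi by (auto simp: absolutely_integrable_on_def)
  have ta: "t \<in> {a..b}" "u \<in> {a..b}" "v \<in> {a..b}" using uv by auto
  have iv: "integral {u..v} phi = G v - G u"
    using Gdiff[OF pI(1) Gi uv(1) _ uv(4)] uv by auto
  have Re0: "Re (Q t) = 0" using Gn[OF ta(1)] Ge[OF ta(1)] by (intro ReQ0) simp
  have eta0: "0 \<le> eta" using qb(1) norm_ge_zero order_trans by blast
  have "norm (cnj (G t) * (G v - G u) - (Q v - Q u)) \<le> 2 * eta * (norm (G v - G t) + norm (G t - G u))"
    by (rule pointwise_term[OF Ge[OF ta(2)] Ge[OF ta(3)] Ge[OF ta(1)] Re0 qb])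
  also have "\<dots> \<le> 2 * eta * (integral {t..v} (\<lambda>s. norm (phi s)) + integral {u..t} (\<lambda>s. norm (phi s)))"
    using Gdiff_norm[OF phi Gi _ uv(3) uv(4)] Gdiff_norm[OF phi Gi uv(1) uv(2)] uv eta0
    by (intro mult_left_mono add_mono) auto
  also have "integral {t..v} (\<lambda>s. norm (phi s)) + integral {u..t} (\<lambda>s. norm (phi s)) = integral {u..v} (\<lambda>s. norm (phi s))"
  proof -
    have "(\<lambda>s. norm (phi s)) integrable_on {u..v}"
      by (rule integrable_on_subinterval[OF pI(2)]) (use uv in auto)
    then show ?thesis using Henstock_Kurzweil_Integration.integral_combine[where a=u and c=t and b=v and f="\<lambda>s. norm (phi s)"] uv by (simp add: add.commute)
  qed
  finally show ?thesis using iv by simp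
qed


lemma alg2:
  fixes C y I w :: complex and c :: real
  assumes "norm C = 1" "c \<ge> 0" "Re w = 0"
  shows "\<bar>c * norm y - c * \<bar>Im (C * y)\<bar>\<bar> \<le> 2 * norm (c *\<^sub>R y - I) + norm (C * I - w)"
proof -
  define u where "u = C * (c *\<^sub>R y)"
  define v where "v = C * I"
  have nu: "norm u = c * norm y" using assms by (simp add: u_def norm_mult)
  have "u = of_real c * (C * y)" by (simp add: u_def scaleR_conv_of_real mult_ac)
  then have "Im u = c * Im (C * y)" by simp
  then have iu: "\<bar>Im u\<bar> = c * \<bar>Im (C * y)\<bar>" using assms by (simp add: abs_mult)
  have "u - v = C * (c *\<^sub>R y - I)" by (simp add: u_def v_def right_diff_distrib)
  then have nuv: "norm (u - v) = norm (c *\<^sub>R y - I)"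
    using assms by (simp add: norm_mult)
  have 1: "\<bar>norm u - norm v\<bar> \<le> norm (u - v)" by (rule norm_triangle_ineq3)
  have 2: "\<bar>\<bar>Im u\<bar> - \<bar>Im v\<bar>\<bar> \<le> norm (u - v)"
    by (metis abs_Im_le_cmod abs_triangle_ineq3 minus_complex.sel(2) order_trans)
  have 3: "norm v - \<bar>Im v\<bar> \<le> \<bar>Re v\<bar>" using cmod_le[of v] by simp
  have 4: "\<bar>Im v\<bar> \<le> norm v" by (rule abs_Im_le_cmod)
  have 5: "\<bar>Re v\<bar> \<le> norm (v - w)" using abs_Re_le_cmod[of "v - w"] assms(3) by simp
  have "\<bar>norm u - \<bar>Im u\<bar>\<bar> \<le> 2 * norm (u - v) + norm (v - w)"
    using 1 2 3 4 5 by linarith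
  then show ?thesis using nu iu nuv by (simp add: v_def)
qed


lemma core_eps:
  fixes G phi Q :: "real \<Rightarrow> complex"
  assumes ab: "a \<le> b" and phi: "phi absolutely_integrable_on {a..b}"
    and Gi: "\<And>t. t\<in>{a..b} \<Longrightarrow> G t = G a + integral {a..t} phi"
    and Ge: "\<And>t. t\<in>{a..b} \<Longrightarrow> G t = exp (Q t)"
    and Gn: "\<And>t. t\<in>{a..b} \<Longrightarrow> norm (G t) = 1"
    and Qc: "continuous_on {a..b} Q"
    and eta: "0 < eta" "eta \<le> 1/2" and eps: "0 < e"
    and F1I: "(\<lambda>t. cnj (G t) * phi t) integrable_on {a..b}"
    and F3I: "(\<lambda>t. \<bar>Im (cnj (G t) * phi t)\<bar>) integrable_on {a..b}"
  shows "norm (integral {a..b} (\<lambda>t. cnj (G t) * phi t) - (Q b - Q a))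
            \<le> 2*e + 2*eta*integral {a..b} (\<lambda>t. norm (phi t))"
    and "\<bar>integral {a..b} (\<lambda>t. norm (phi t)) - integral {a..b} (\<lambda>t. \<bar>Im (cnj (G t) * phi t)\<bar>)\<bar>
            \<le> 4*e + 2*eta*integral {a..b} (\<lambda>t. norm (phi t))"
proof -
  define F1 where "F1 = (\<lambda>t. cnj (G t) * phi t)"
  define F2 where "F2 = (\<lambda>t. norm (phi t))"
  define F3 where "F3 = (\<lambda>t. \<bar>Im (cnj (G t) * phi t)\<bar>)"
  define N where "N = integral {a..b} F2"
  have pI: "phi integrable_on {a..b}" and F2I: "F2 integrable_on {a..b}"
    using phi by (auto simp: absolutely_integrable_on_def F2_def)
  have F1I': "F1 integrable_on {a..b}" "F3 integrable_on {a..b}" using F1I F3I by (auto simp: F1_def F3_def)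
  have "uniformly_continuous_on {a..b} Q"
    using Qc by (intro compact_uniformly_continuous) auto
  then obtain d where d: "d > 0" and dQ: "\<And>x y. x\<in>{a..b} \<Longrightarrow> y\<in>{a..b} \<Longrightarrow> dist y x < d \<Longrightarrow> dist (Q y) (Q x) < eta"
    unfolding uniformly_continuous_on_def using eta by metis
  obtain g1 where g1: "gauge g1" and g1D': "\<forall>D. D tagged_division_of {a..b} \<and> g1 fine D \<longrightarrow>
      norm (sum (\<lambda>(x,k). Henstock_Kurzweil_Integration.content k *\<^sub>R F1 x) D - integral {a..b} F1) < e"
    using has_integral_real[THEN iffD1, OF integrable_integral[OF F1I'(1)], rule_format, OF eps] by blast
  have g1D: "\<And>D. D tagged_division_of {a..b} \<Longrightarrow> g1 fine D \<Longrightarrow>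
      norm (sum (\<lambda>(x,k). Henstock_Kurzweil_Integration.content k *\<^sub>R F1 x) D - integral {a..b} F1) < e"
    using g1D' by blast
  obtain g2 where g2: "gauge g2" and g2D': "\<forall>D. D tagged_division_of {a..b} \<and> g2 fine D \<longrightarrow>
      norm (sum (\<lambda>(x,k). Henstock_Kurzweil_Integration.content k *\<^sub>R F2 x) D - integral {a..b} F2) < e"
    using has_integral_real[THEN iffD1, OF integrable_integral[OF F2I], rule_format, OF eps] by blast
  have g2D: "\<And>D. D tagged_division_of {a..b} \<Longrightarrow> g2 fine D \<Longrightarrow>
      norm (sum (\<lambda>(x,k). Henstock_Kurzweil_Integration.content k *\<^sub>R F2 x) D - integral {a..b} F2) < e"
    using g2D' by blast
  obtain g3 where g3: "gauge g3" and g3D': "\<forall>D. D tagged_division_of {a..b} \<and> g3 fine D \<longrightarrow>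
      norm (sum (\<lambda>(x,k). Henstock_Kurzweil_Integration.content k *\<^sub>R F3 x) D - integral {a..b} F3) < e"
    using has_integral_real[THEN iffD1, OF integrable_integral[OF F1I'(2)], rule_format, OF eps] by blast
  have g3D: "\<And>D. D tagged_division_of {a..b} \<Longrightarrow> g3 fine D \<Longrightarrow>
      norm (sum (\<lambda>(x,k). Henstock_Kurzweil_Integration.content k *\<^sub>R F3 x) D - integral {a..b} F3) < e"
    using g3D' by blast
  have pI': "phi integrable_on cbox a b" using pI by simp
  obtain g4 where g4: "gauge g4" and g4D: "\<And>p. p tagged_partial_division_of (cbox a b) \<Longrightarrow> g4 fine p \<Longrightarrow>
      sum (\<lambda>(x,k). norm (Henstock_Kurzweil_Integration.content k *\<^sub>R phi x - integral k phi)) p < e"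
    by (rule Henstock_lemma[OF pI' eps]) blast
  define g where "g = (\<lambda>x. ball x d \<inter> (g1 x \<inter> (g2 x \<inter> (g3 x \<inter> g4 x))))"
  have "gauge g" unfolding g_def using d g1 g2 g3 g4 by (intro gauge_Int gauge_ball) auto
  then obtain D where D: "D tagged_division_of {a..b}" and gD: "g fine D"
    using fine_division_exists_real by blast
  have fines: "(\<lambda>x. ball x d) fine D" "g1 fine D" "g2 fine D" "g3 fine D" "g4 fine D"
    using gD unfolding g_def fine_Int by auto
  have S1: "norm (sum (\<lambda>(x,k). Henstock_Kurzweil_Integration.content k *\<^sub>R F1 x) D - integral {a..b} F1) < e" using g1D[OF D fines(2)] .
  have S2: "norm (sum (\<lambda>(x,k). Henstock_Kurzweil_Integration.content k *\<^sub>R F2 x) D - integral {a..b} F2) < e" using g2D[OF D fines(3)] .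
  have S3: "norm (sum (\<lambda>(x,k). Henstock_Kurzweil_Integration.content k *\<^sub>R F3 x) D - integral {a..b} F3) < e" using g3D[OF D fines(4)] .
  have S4: "sum (\<lambda>(x,k). norm (Henstock_Kurzweil_Integration.content k *\<^sub>R phi x - integral k phi)) D < e"
    using g4D[OF _ fines(5)] D by (simp add: tagged_division_of_def)
  have finD: "finite D" using D by blast
  define z where "z = (\<lambda>(x::real, k::real set). cnj (G x) * integral k phi)"
  define R where "R = (\<lambda>(x::real, k::real set). norm (Henstock_Kurzweil_Integration.content k *\<^sub>R phi x - integral k phi))"
  define W where "W = (\<lambda>(x::real, k::real set). Q (Sup k) - Q (Inf k))"
  define M where "M = (\<lambda>(x::real, k::real set). integral k F2)"
  have termD: "norm (z p - W p) \<le> 2*eta * M p" "Re (W p) = 0" if p: "p \<in> D" for p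
  proof -
    obtain x k where pk: "p = (x,k)" by force
    have xk: "x \<in> k" "k \<subseteq> {a..b}" and "\<exists>u v. k = cbox u v" using D p pk by blast+
    then obtain u v where k: "k = {u..v}" by auto
    have uv: "a \<le> u" "u \<le> x" "x \<le> v" "v \<le> b" using xk k by auto
    have kb: "k \<subseteq> ball x d" using fines(1) p pk unfolding fine_def by auto
    have "u \<in> k" "v \<in> k" using k uv by auto
    then have "u \<in> ball x d" "v \<in> ball x d" using kb by auto
    then have du: "dist u x < d" "dist v x < d" by (auto simp: dist_commute mem_ball)
    have xab: "x \<in> {a..b}" "u \<in> {a..b}" "v \<in> {a..b}" using uv by auto
    have qb: "norm (Q v - Q x) \<le> eta" "norm (Q u - Q x) \<le> eta"
      using dQ[OF xab(1) xab(3) du(2)] dQ[OF xab(1) xab(2) du(1)] by (auto simp: dist_norm)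
    have SI: "Sup k = v" "Inf k = u" using k uv by auto
    show "norm (z p - W p) \<le> 2*eta * M p"
      using term_bound[OF phi Gi Ge Gn uv qb eta(2)] unfolding z_def W_def M_def pk F2_def
      by (simp add: SI) (simp add: k)
    have "Re (Q v) = 0" "Re (Q u) = 0" using Gn Ge xab by (metis ReQ0)+
    then show "Re (W p) = 0" by (simp add: W_def pk SI)
  qed
  have sumW: "sum W D = Q b - Q a"
    using additive_tagged_division_1[OF ab D, of Q] unfolding W_def by simp
  have sumM: "sum M D = N"
    using integral_combine_tagged_division_topdown[of F2 a b D] F2I D unfolding M_def N_def by simp
  have sumzW: "norm (sum z D - sum W D) \<le> 2*eta*N"
  proof -
    have "norm (sum z D - sum W D) = norm (sum (\<lambda>p. z p - W p) D)" by (simp add: sum_subtractf)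
    also have "\<dots> \<le> sum (\<lambda>p. 2*eta * M p) D" by (rule sum_norm_le) (use termD in auto)
    also have "\<dots> = 2*eta*N" using sumM by (simp add: sum_distrib_left[symmetric])
    finally show ?thesis .
  qed
  have sumR: "sum R D < e" using S4 unfolding R_def .
  have nC: "norm (cnj (G x)) = 1" if "x \<in> {a..b}" for x using Gn[OF that] by simp
  have memD: "x \<in> {a..b}" "Henstock_Kurzweil_Integration.content k \<ge> 0" if "(x,k) \<in> D" for x k
    using D that by (blast, simp)
  have tri: "norm (p + q + r) \<le> norm p + norm q + norm r" for p q r :: "'x::real_normed_vector"
    using norm_triangle_ineq[of "p+q" r] norm_triangle_ineq[of p q] by simp
  have T1: "norm (sum (\<lambda>(x,k). Henstock_Kurzweil_Integration.content k *\<^sub>R F1 x) D - sum z D) \<le> sum R D"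
  proof -
    have "sum (\<lambda>(x,k). Henstock_Kurzweil_Integration.content k *\<^sub>R F1 x) D - sum z D
        = sum (\<lambda>p. (case p of (x,k) \<Rightarrow> Henstock_Kurzweil_Integration.content k *\<^sub>R F1 x) - z p) D"
      by (simp add: sum_subtractf)
    also have "norm \<dots> \<le> sum R D"
    proof (rule sum_norm_le)
      fix p assume p: "p \<in> D"
      obtain x k where pk: "p = (x,k)" by force
      have "(case p of (x,k) \<Rightarrow> Henstock_Kurzweil_Integration.content k *\<^sub>R F1 x) - z p
          = cnj (G x) * (Henstock_Kurzweil_Integration.content k *\<^sub>R phi x - integral k phi)"
        by (simp add: pk z_def F1_def scaleR_conv_of_real algebra_simps)
      then show "norm ((case p of (x,k) \<Rightarrow> Henstock_Kurzweil_Integration.content k *\<^sub>R F1 x) - z p) \<le> R p"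
        using nC[OF memD(1)] p pk by (simp add: R_def norm_mult)
    qed
    finally show ?thesis .
  qed
  show "norm (integral {a..b} (\<lambda>t. cnj (G t) * phi t) - (Q b - Q a))
            \<le> 2*e + 2*eta*integral {a..b} (\<lambda>t. norm (phi t))"
  proof -
    let ?A = "sum (\<lambda>(x,k). Henstock_Kurzweil_Integration.content k *\<^sub>R F1 x) D"
    have "integral {a..b} F1 - (Q b - Q a) = (integral {a..b} F1 - ?A) + (?A - sum z D) + (sum z D - sum W D)"
      using sumW by simp
    then have "norm (integral {a..b} F1 - (Q b - Q a)) \<le> norm (integral {a..b} F1 - ?A) + norm (?A - sum z D) + norm (sum z D - sum W D)"
      using tri by metis
    moreover have "norm (integral {a..b} F1 - ?A) < e" using S1 by (simp add: norm_minus_commute)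
    ultimately show ?thesis using T1 sumR sumzW unfolding F1_def N_def F2_def by linarith
  qed
  show "\<bar>integral {a..b} (\<lambda>t. norm (phi t)) - integral {a..b} (\<lambda>t. \<bar>Im (cnj (G t) * phi t)\<bar>)\<bar>
            \<le> 4*e + 2*eta*integral {a..b} (\<lambda>t. norm (phi t))"
  proof -
    let ?A2 = "sum (\<lambda>(x,k). Henstock_Kurzweil_Integration.content k *\<^sub>R F2 x) D"
    let ?A3 = "sum (\<lambda>(x,k). Henstock_Kurzweil_Integration.content k *\<^sub>R F3 x) D"
    have "\<bar>?A2 - ?A3\<bar> = \<bar>sum (\<lambda>p. (case p of (x,k) \<Rightarrow> Henstock_Kurzweil_Integration.content k *\<^sub>R F2 x)
                                   - (case p of (x,k) \<Rightarrow> Henstock_Kurzweil_Integration.content k *\<^sub>R F3 x)) D\<bar>"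
      by (simp only: sum_subtractf)
    also have "\<dots> \<le> sum (\<lambda>p. 2 * R p + 2*eta * M p) D"
    proof (rule order_trans[OF sum_abs sum_mono])
      fix p assume p: "p \<in> D"
      obtain x k where pk: "p = (x,k)" by force
      have "\<bar>Henstock_Kurzweil_Integration.content k * norm (phi x) - Henstock_Kurzweil_Integration.content k * \<bar>Im (cnj (G x) * phi x)\<bar>\<bar>
          \<le> 2 * norm (Henstock_Kurzweil_Integration.content k *\<^sub>R phi x - integral k phi) + norm (cnj (G x) * integral k phi - W p)"
        using alg2[OF nC[OF memD(1)] memD(2) termD(2)] p pk by blast
      also have "\<dots> \<le> 2 * R p + 2*eta * M p"
        using termD(1)[OF p] by (simp add: pk R_def z_def)
      finally show "\<bar>(case p of (x,k) \<Rightarrow> Henstock_Kurzweil_Integration.content k *\<^sub>R F2 x)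
                                   - (case p of (x,k) \<Rightarrow> Henstock_Kurzweil_Integration.content k *\<^sub>R F3 x)\<bar> \<le> 2 * R p + 2*eta * M p"
        by (simp add: pk F2_def F3_def)
    qed
    also have "\<dots> = 2 * sum R D + 2*eta*N" using sumM by (simp add: sum.distrib sum_distrib_left[symmetric])
    finally have "\<bar>?A2 - ?A3\<bar> \<le> 2 * sum R D + 2*eta*N" .
    then show ?thesis using S2 S3 sumR unfolding F2_def F3_def N_def real_norm_def by linarith
  qed
qed



lemma eps_zero:
  fixes X N :: real
  assumes N: "N \<ge> 0" and H: "\<And>e eta. 0<e \<Longrightarrow> 0<eta \<Longrightarrow> eta \<le> 1/2 \<Longrightarrow> X \<le> 4*e + 2*eta*N"
  shows "X \<le> 0"
proof (rule ccontr)
  assume "\<not> X \<le> 0" then have X: "X > 0" by simp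
  define eta where "eta = min (1/2) (X / (8*(N+1)))"
  have eta: "0 < eta" "eta \<le> 1/2" using X N by (auto simp: eta_def min_def)
  have "eta * N \<le> X / (8*(N+1)) * N" using N by (intro mult_right_mono) (auto simp: eta_def)
  also have "\<dots> \<le> X / 8" using X N by (simp add: field_simps)
  finally have "2*eta*N \<le> X/4" by simp
  moreover have "X \<le> 4*(X/16) + 2*eta*N" using H[of "X/16" eta] X eta by simp
  ultimately show False using X by simp
qed

lemma core:
  fixes G phi Q :: "real \<Rightarrow> complex"
  assumes ab: "a \<le> b" and phi: "phi absolutely_integrable_on {a..b}"
    and Gi: "\<And>t. t\<in>{a..b} \<Longrightarrow> G t = G a + integral {a..t} phi"
    and Ge: "\<And>t. t\<in>{a..b} \<Longrightarrow> G t = exp (Q t)"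
    and Gn: "\<And>t. t\<in>{a..b} \<Longrightarrow> norm (G t) = 1"
    and Qc: "continuous_on {a..b} Q"
  shows "integral {a..b} (\<lambda>t. cnj (G t) * phi t) = Q b - Q a"
    and "integral {a..b} (\<lambda>t. norm (phi t)) = integral {a..b} (\<lambda>t. \<bar>Im (cnj (G t) * phi t)\<bar>)"
    and "(\<lambda>t. cnj (G t) * phi t) absolutely_integrable_on {a..b}"
proof -
  have Gc: "continuous_on {a..b} G"
    using continuous_on_exp[OF Qc] by (rule continuous_on_eq) (use Ge in auto)
  then have cGc: "continuous_on {a..b} (\<lambda>t. cnj (G t))" by (intro continuous_intros)
  have "bounded ((\<lambda>t. cnj (G t)) ` {a..b})"
    using cGc by (intro compact_imp_bounded compact_continuous_image) auto
  moreover have "(\<lambda>t. cnj (G t)) \<in> borel_measurable (lebesgue_on {a..b})"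
    using cGc by (intro continuous_imp_measurable_on_sets_lebesgue) auto
  ultimately show AI: "(\<lambda>t. cnj (G t) * phi t) absolutely_integrable_on {a..b}"
    using absolutely_integrable_bounded_measurable_product[OF bilinear_times, of "\<lambda>t. cnj (G t)" "{a..b}" phi] phi
    by auto
  then have F1I: "(\<lambda>t. cnj (G t) * phi t) integrable_on {a..b}"
    by (simp add: absolutely_integrable_on_def)
  have "(\<lambda>t. Im (cnj (G t) * phi t)) absolutely_integrable_on {a..b}"
    using absolutely_integrable_linear[OF AI bounded_linear_Im] by (simp add: o_def)
  then have F3I: "(\<lambda>t. \<bar>Im (cnj (G t) * phi t)\<bar>) integrable_on {a..b}"
    by (simp add: absolutely_integrable_on_def)
  have N: "integral {a..b} (\<lambda>t. norm (phi t)) \<ge> 0"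
    using phi by (intro integral_nonneg) (auto simp: absolutely_integrable_on_def)
  note CE = core_eps[OF ab phi Gi Ge Gn Qc _ _ _ F1I F3I]
  have "norm (integral {a..b} (\<lambda>t. cnj (G t) * phi t) - (Q b - Q a)) \<le> 0"
    using N by (rule eps_zero) (use CE(1) in fastforce)
  then show "integral {a..b} (\<lambda>t. cnj (G t) * phi t) = Q b - Q a" by simp
  have "\<bar>integral {a..b} (\<lambda>t. norm (phi t)) - integral {a..b} (\<lambda>t. \<bar>Im (cnj (G t) * phi t)\<bar>)\<bar> \<le> 0"
    using N by (rule eps_zero) (use CE(2) in fastforce)
  then show "integral {a..b} (\<lambda>t. norm (phi t)) = integral {a..b} (\<lambda>t. \<bar>Im (cnj (G t) * phi t)\<bar>)" by simp
qed



lemma W11_facts: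
  assumes W: "W11_S1 f df" and dg: "deg f = of_int d"
  shows "integral {0..2*pi} (\<lambda>t. wedge f df t) = 2*pi*d"
    and "integral {0..2*pi} (\<lambda>t. norm (df t)) = integral {0..2*pi} (\<lambda>t. \<bar>wedge f df t\<bar>)"
    and "(\<lambda>t. wedge f df t) absolutely_integrable_on {0..2*pi}"
    and "continuous_on {0..2*pi} (\<lambda>t. f (cis t))"
proof -
  define G where "G = (\<lambda>t. f (cis t))"
  have n1: "\<And>z. cmod z = 1 \<Longrightarrow> cmod (f z) = 1" and phi: "df absolutely_integrable_on {0..2*pi}"
    and fi: "\<And>t. t\<in>{0..2*pi} \<Longrightarrow> f (cis t) = f 1 + integral {0..t} df"
    using W unfolding W11_S1_def by auto
  have G0: "G 0 = f 1" by (simp add: G_def)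
  have Gi: "\<And>t. t\<in>{0..2*pi} \<Longrightarrow> G t = G 0 + integral {0..t} df"
    using fi G0 by (simp add: G_def)
  have Gn: "\<And>t. norm (G t) = 1" using n1 by (simp add: G_def)
  have dI: "df integrable_on {0..2*pi}" using phi by (simp add: absolutely_integrable_on_def)
  have Gc: "continuous_on {0..2*pi} G"
  proof -
    have "continuous_on {0..2*pi} (\<lambda>t. G 0 + integral {0..t} df)"
      by (intro continuous_intros indefinite_integral_continuous_1 dI)
    then show ?thesis by (rule continuous_on_eq) (metis Gi)
  qed
  then show "continuous_on {0..2*pi} (\<lambda>t. f (cis t))" by (simp add: G_def)
  define pp where "pp = (\<lambda>x. f (cis (2*pi*x)))"
  have pG: "pp = G \<circ> (\<lambda>x. 2*pi*x)" by (auto simp: pp_def G_def)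
  have "path pp" unfolding path_def pG
    by (intro continuous_on_compose continuous_intros continuous_on_subset[OF Gc]) (auto simp: mult_le_cancel_left1)
  moreover have "0 \<notin> path_image pp"
  proof
    assume "0 \<in> path_image pp"
    then obtain x where "G (2*pi*x) = 0" by (auto simp: path_image_def pp_def G_def)
    then show False using Gn[of "2*pi*x"] by simp
  qed
  ultimately obtain q where qp: "path q" and qd: "pathfinish q - pathstart q = 2 * of_real pi * \<i> * winding_number pp 0"
    and qe: "\<And>t. t \<in> {0..1} \<Longrightarrow> pp t = 0 + exp (q t)"
    by (rule winding_number_as_continuous_log) blast
  define Q where "Q = (\<lambda>t. q (t / (2*pi)))"
  have Qc: "continuous_on {0..2*pi} Q"
  proof -
    have qc: "continuous_on {0..1} q" using qp unfolding path_def .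
    have c1: "continuous_on {0..2*pi} (\<lambda>t::real. t / (2*pi))" by (intro continuous_intros) auto
    have s1: "(\<lambda>t::real. t / (2*pi)) ` {0..2*pi} \<subseteq> {0..1}" by (auto simp: field_simps)
    show ?thesis unfolding Q_def by (rule continuous_on_compose2[OF qc c1 s1])
  qed
  have Ge: "G t = exp (Q t)" if "t \<in> {0..2*pi}" for t
  proof -
    have "t/(2*pi) \<in> {0..1}" using that by (auto simp: field_simps)
    from qe[OF this] show ?thesis by (simp add: pp_def G_def Q_def)
  qed
  have QQ: "Q (2*pi) - Q 0 = 2 * of_real pi * \<i> * of_int d"
    using qd dg unfolding deg_def pp_def[symmetric] by (simp add: Q_def pathfinish_def pathstart_def)
  note C = core[OF _ phi Gi Ge Gn Qc]
  have I1: "integral {0..2*pi} (\<lambda>t. cnj (G t) * df t) = 2 * of_real pi * \<i> * of_int d"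
    using C(1) QQ by simp
  have AI: "(\<lambda>t. cnj (G t) * df t) absolutely_integrable_on {0..2*pi}" using C(3) by simp
  then have "(\<lambda>t. Im (cnj (G t) * df t)) absolutely_integrable_on {0..2*pi}"
    using absolutely_integrable_linear[OF AI bounded_linear_Im] by (simp add: o_def)
  then show "(\<lambda>t. wedge f df t) absolutely_integrable_on {0..2*pi}"
    by (simp add: wedge_def G_def)
  have "((\<lambda>t. Im (cnj (G t) * df t)) has_integral Im (2 * of_real pi * \<i> * of_int d)) {0..2*pi}"
    using has_integral_Im[OF integrable_integral[OF set_lebesgue_integral_eq_integral(1)[OF AI]]] I1 by simp
  then show "integral {0..2*pi} (\<lambda>t. wedge f df t) = 2*pi*d"
    by (simp add: wedge_def G_def integral_unique)
  show "integral {0..2*pi} (\<lambda>t. norm (df t)) = integral {0..2*pi} (\<lambda>t. \<bar>wedge f df t\<bar>)"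
    using C(2) by (simp add: wedge_def G_def)
qed



lemma unit_eq:
  fixes F G :: complex and x y :: real
  assumes F: "norm F = 1" and G: "norm G = 1" and x: "x > 0"
    and e: "norm (of_real x * F - of_real y * G) = y - x"
  shows "F = G"
proof -
  have yx: "y - x \<ge> 0" using e norm_ge_zero by metis
  have F2: "Re F ^ 2 + Im F ^ 2 = 1" using F by (simp add: cmod_def)
  have G2: "Re G ^ 2 + Im G ^ 2 = 1" using G by (simp add: cmod_def)
  have "(norm (of_real x * F - of_real y * G))^2 = (y - x)^2" using e by simp
  then have "(x * Re F - y * Re G)^2 + (x * Im F - y * Im G)^2 = (y - x)^2"
    by (simp add: cmod_def)
  then have "x^2 * (Re F ^ 2 + Im F ^ 2) + y^2 * (Re G ^ 2 + Im G ^ 2) - 2*x*y*(Re F * Re G + Im F * Im G) = x^2 + y^2 - 2*x*y"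
    by (simp add: power2_eq_square algebra_simps)
  then have "x^2 * 1 + y^2 * 1 - 2*x*y*(Re F * Re G + Im F * Im G) = x^2 + y^2 - 2*x*y"
    unfolding F2 G2 .
  then have "2*(x*y*(Re F * Re G + Im F * Im G)) = 2*(x*y)" by (simp add: algebra_simps)
  then have "x*y*(Re F * Re G + Im F * Im G) = x*y" by simp
  moreover have "x*y > 0" using x yx by simp
  ultimately have d: "Re F * Re G + Im F * Im G = 1" by auto
  have "(Re F - Re G)^2 + (Im F - Im G)^2 = 0"
    using F2 G2 d by (simp add: power2_eq_square algebra_simps)
  then have "Re F = Re G" "Im F = Im G" by (simp_all add: sum_power2_eq_zero_iff)
  then show ?thesis by (simp add: complex_eq_iff)
qed

lemma unit_rot:
  fixes F a :: complex
  assumes F: "norm F = 1" and n: "norm a = \<bar>Im (cnj F * a)\<bar>"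
  shows "a = \<i> * of_real (Im (cnj F * a)) * F"
proof -
  define al where "al = cnj F * a"
  have "norm al = norm a" using F by (simp add: al_def norm_mult)
  then have "sqrt (Re al ^ 2 + Im al ^ 2) = \<bar>Im al\<bar>" using n by (simp add: cmod_def al_def)
  then have "Re al ^ 2 + Im al ^ 2 = Im al ^ 2" by (metis real_sqrt_abs real_sqrt_eq_iff)
  then have "Re al = 0" by simp
  then have al: "al = \<i> * of_real (Im al)" by (simp add: complex_eq_iff)
  have "F * cnj F = 1" using F by (simp add: complex_norm_square[symmetric] flip: of_real_power)
  then have "a = F * al" by (simp add: al_def mult.assoc[symmetric])
  also have "\<dots> = \<i> * of_real (Im al) * F" using al by (metis mult.commute)
  finally show ?thesis by (simp add: al_def)
qed

lemma alg3:
  fixes F G a b :: complex and s :: real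
  assumes F: "norm F = 1" and G: "norm G = 1" and s: "s = 1 \<or> s = -1"
    and h1: "norm (a - b) = norm b - norm a"
    and h2: "norm b = \<bar>Im (cnj G * b)\<bar>" and h3: "\<bar>Im (cnj G * b)\<bar> = s * Im (cnj G * b)"
    and h4: "norm a = \<bar>Im (cnj F * a)\<bar>" and h5: "s * Im (cnj F * a) > 0"
  shows "F = G"
proof -
  define A where "A = Im (cnj F * a)"
  define B where "B = Im (cnj G * b)"
  have a: "a = \<i> * of_real A * F" using unit_rot[OF F h4] by (simp add: A_def)
  have b: "b = \<i> * of_real B * G" using unit_rot[OF G h2] by (simp add: B_def)
  have sA: "\<bar>A\<bar> = s * A" using h5 s by (auto simp: A_def)
  have "a - b = (\<i> * of_real s) * (of_real (s*A) * F - of_real (s*B) * G)"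
    using s a b by (auto simp: algebra_simps)
  then have "norm (a - b) = norm (of_real (s*A) * F - of_real (s*B) * G)"
    using s by (auto simp: norm_mult)
  moreover have "norm a = s * A" using h4 sA by (simp add: A_def)
  moreover have "norm b = s * B" using h2 h3 by (simp add: B_def)
  ultimately have "norm (of_real (s*A) * F - of_real (s*B) * G) = s*B - s*A" using h1 by simp
  moreover have "s*A > 0" using h5 by (simp add: A_def)
  ultimately show ?thesis using unit_eq[OF F G, of "s*A" "s*B"] by blast
qed



lemma AE_negl:
  assumes "AE x in lebesgue. P x"
  obtains N where "negligible N" "\<And>x. x \<notin> N \<Longrightarrow> P x"
proof -
  obtain N where N: "{x \<in> space lebesgue. \<not> P x} \<subseteq> N" "emeasure lebesgue N = 0" "N \<in> sets lebesgue"
    using assms by (rule AE_E)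
  then have "negligible N" by (simp add: negligible_iff_null_sets null_setsI)
  moreover have "\<And>x. x \<notin> N \<Longrightarrow> P x" using N(1) by auto
  ultimately show ?thesis using that by blast
qed

lemma integral_zero_AE:
  fixes h :: "real \<Rightarrow> real"
  assumes hI: "h integrable_on S" and nn: "\<And>x. x\<in>S \<Longrightarrow> h x \<ge> 0" and z: "integral S h = 0"
  shows "AE x in lebesgue. x \<in> S \<longrightarrow> h x = 0"
proof -
  have af: "h absolutely_integrable_on S"
    using hI nn by (intro nonnegative_absolutely_integrable_1) auto
  then have "integral S h = set_lebesgue_integral lebesgue S h"
    by (intro set_lebesgue_integral_eq_integral(2)[symmetric])
  also have "\<dots> = 0 \<longleftrightarrow> (AE x in lebesgue. indicator S x *\<^sub>R h x = 0)"
    unfolding set_lebesgue_integral_def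
  proof (rule integral_nonneg_eq_0_iff_AE)
    show "integrable lebesgue (\<lambda>x. indicat_real S x *\<^sub>R h x)"
      by (metis af set_integrable_def)
  qed (use nn in \<open>auto simp: indicator_def\<close>)
  finally have "AE x in lebesgue. indicator S x *\<^sub>R h x = 0" using z by simp
  then show ?thesis by eventually_elim (auto simp: indicator_def split: if_splits)
qed

lemma sign_conv:
  fixes w :: real and d1 :: int
  assumes "d1 \<noteq> 0" "s = (if d1 > 0 then 1 else -1)"
  shows "(real_of_int d1 * w \<ge> 0 \<longleftrightarrow> s * w \<ge> 0)" "(real_of_int d1 * w > 0 \<longleftrightarrow> s * w > 0)"
  using assms by (auto simp: zero_le_mult_iff zero_less_mult_iff)



lemma wedge_le_norm:
  assumes "norm (g (cis t)) = 1"
  shows "\<bar>wedge g dg t\<bar> \<le> norm (dg t)"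
proof -
  have "\<bar>wedge g dg t\<bar> \<le> norm (cnj (g (cis t)) * dg t)" unfolding wedge_def by (rule abs_Im_le_cmod)
  also have "\<dots> = norm (dg t)" using assms by (simp add: norm_mult)
  finally show ?thesis .
qed

lemma W11_norm: "W11_S1 f df \<Longrightarrow> norm (f (cis t)) = 1"
  unfolding W11_S1_def by simp

theorem lemma3p3:
  fixes d1 d2 :: int and f :: "complex \<Rightarrow> complex" and df :: "real \<Rightarrow> complex"
  assumes "d1 * (d2 - d1) > 0"
    and "W11_S1 f df" and "deg f = of_int d1"
    and "AE t in lborel. t \<in> {0..2*pi} \<longrightarrow> real_of_int d1 * wedge f df t \<ge> 0"
  shows "(\<forall>g dg. W11_S1 g dg \<and> deg g = of_int d2 \<longrightarrow>
            integral {0..2*pi} (\<lambda>t. cmod (df t - dg t)) \<ge> 2*pi*\<bar>real_of_int (d1 - d2)\<bar>)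
       \<and> ((AE t in lborel. t \<in> {0..2*pi} \<longrightarrow> real_of_int d1 * wedge f df t > 0) \<longrightarrow>
          (\<forall>g dg. W11_S1 g dg \<and> deg g = of_int d2 \<longrightarrow>
            integral {0..2*pi} (\<lambda>t. cmod (df t - dg t)) > 2*pi*\<bar>real_of_int (d1 - d2)\<bar>))"
proof -
  have hd: "d1 * (d2 - d1) > 0" using assms(1) .
  have d1ne: "d1 \<noteq> 0" using hd by auto
  have d12: "d1 \<noteq> d2" using hd by auto
  define s :: real where "s = (if d1 > 0 then 1 else -1)"
  have s: "s = 1 \<or> s = -1" by (simp add: s_def)
  have sabs: "2*pi*\<bar>real_of_int (d1 - d2)\<bar> = s * (2*pi*d2) - s * (2*pi*d1)"
  proof (cases "d1 > 0")
    case True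
    then have "d2 - d1 > 0" using hd by (simp add: zero_less_mult_iff)
    then show ?thesis using True by (simp add: s_def algebra_simps)
  next
    case False
    then have "d1 < 0" using d1ne by simp
    then have "d2 - d1 < 0" using hd by (simp add: zero_less_mult_iff)
    then show ?thesis using False by (simp add: s_def algebra_simps)
  qed
  note Ff = W11_facts[OF assms(2) assms(3)]
  define wf where "wf = (\<lambda>t. wedge f df t)"
  have "AE t in lebesgue. t \<in> {0..2*pi} \<longrightarrow> real_of_int d1 * wedge f df t \<ge> 0"
    using AE_completion[OF assms(4)] .
  then have "AE t in lebesgue. t \<in> {0..2*pi} \<longrightarrow> s * wf t \<ge> 0"
    by eventually_elim (simp add: wf_def sign_conv[OF d1ne s_def])
  then obtain N0 where N0: "negligible N0" "\<And>t. t \<notin> N0 \<Longrightarrow> t \<in> {0..2*pi} \<longrightarrow> s * wf t \<ge> 0"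
    by (rule AE_negl) blast
  have dfI: "df absolutely_integrable_on {0..2*pi}" using assms(2) by (simp add: W11_S1_def)
  have ndfI: "(\<lambda>t. norm (df t)) integrable_on {0..2*pi}" using dfI by (simp add: absolutely_integrable_on_def)
  have intf: "integral {0..2*pi} (\<lambda>t. norm (df t)) = s * (2*pi*d1)"
  proof -
    have "integral {0..2*pi} (\<lambda>t. norm (df t)) = integral {0..2*pi} (\<lambda>t. \<bar>wf t\<bar>)"
      using Ff(2) by (simp add: wf_def)
    also have "\<dots> = integral {0..2*pi} (\<lambda>t. s * wf t)"
    proof (rule integral_spike[OF N0(1)])
      fix t assume t: "t \<in> {0..2*pi} - N0"
      then have "s * wf t \<ge> 0" using N0(2) by auto
      then show "s * wf t = \<bar>wf t\<bar>" using s by auto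
    qed
    also have "\<dots> = s * (2*pi*d1)" using Ff(1) by (simp add: wf_def)
    finally show ?thesis .
  qed
  have lower: "integral {0..2*pi} (\<lambda>t. cmod (df t - dg t)) \<ge> 2*pi*\<bar>real_of_int (d1 - d2)\<bar>"
    and Hint: "integral {0..2*pi} (\<lambda>t. cmod (df t - dg t) + norm (df t) - s * wedge g dg t)
             = integral {0..2*pi} (\<lambda>t. cmod (df t - dg t)) - 2*pi*\<bar>real_of_int (d1 - d2)\<bar>"
    and HI: "(\<lambda>t. cmod (df t - dg t) + norm (df t) - s * wedge g dg t) integrable_on {0..2*pi}"
    if W: "W11_S1 g dg" and dg: "deg g = of_int d2" for g dg
  proof -
    note Fg = W11_facts[OF W dg]
    have dgI: "dg absolutely_integrable_on {0..2*pi}" using W by (simp add: W11_S1_def)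
    have "(\<lambda>t. df t - dg t) absolutely_integrable_on {0..2*pi}" by (rule set_integral_diff(1)[OF dfI dgI])
    then have ndI: "(\<lambda>t. cmod (df t - dg t)) integrable_on {0..2*pi}" by (simp add: absolutely_integrable_on_def)
    have ndgI: "(\<lambda>t. norm (dg t)) integrable_on {0..2*pi}" using dgI by (simp add: absolutely_integrable_on_def)
    have wgI: "(\<lambda>t. wedge g dg t) integrable_on {0..2*pi}" using Fg(3) by (simp add: absolutely_integrable_on_def)
    have swgI: "(\<lambda>t. s * wedge g dg t) integrable_on {0..2*pi}"
      using integrable_on_cmult_left[OF wgI, of s] by simp
    have awgI: "(\<lambda>t. \<bar>wedge g dg t\<bar>) integrable_on {0..2*pi}"
      using Fg(3) by (simp add: absolutely_integrable_on_def)
    have ig: "integral {0..2*pi} (\<lambda>t. s * wedge g dg t) = s * (2*pi*d2)" using Fg(1) by simp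
    have "integral {0..2*pi} (\<lambda>t. s * wedge g dg t) \<le> integral {0..2*pi} (\<lambda>t. \<bar>wedge g dg t\<bar>)"
      using swgI awgI by (rule integral_le) (use s in auto)
    then have g1: "integral {0..2*pi} (\<lambda>t. norm (dg t)) \<ge> s * (2*pi*d2)" using Fg(2) ig by linarith
    have "integral {0..2*pi} (\<lambda>t. norm (dg t) - norm (df t)) \<le> integral {0..2*pi} (\<lambda>t. cmod (df t - dg t))"
    proof (rule integral_le)
      show "(\<lambda>t. norm (dg t) - norm (df t)) integrable_on {0..2*pi}" using ndgI ndfI by (rule integrable_diff)
      show "(\<lambda>t. cmod (df t - dg t)) integrable_on {0..2*pi}" by (rule ndI)
      fix t show "norm (dg t) - norm (df t) \<le> cmod (df t - dg t)"
        by (metis norm_minus_commute norm_triangle_ineq2)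
    qed
    moreover have "integral {0..2*pi} (\<lambda>t. norm (dg t) - norm (df t))
        = integral {0..2*pi} (\<lambda>t. norm (dg t)) - integral {0..2*pi} (\<lambda>t. norm (df t))"
      using ndgI ndfI by (rule integral_diff)
    ultimately show "integral {0..2*pi} (\<lambda>t. cmod (df t - dg t)) \<ge> 2*pi*\<bar>real_of_int (d1 - d2)\<bar>"
      using g1 intf sabs by linarith
    show HI: "(\<lambda>t. cmod (df t - dg t) + norm (df t) - s * wedge g dg t) integrable_on {0..2*pi}"
      by (rule integrable_diff[OF integrable_add[OF ndI ndfI] swgI])
    have "integral {0..2*pi} (\<lambda>t. cmod (df t - dg t) + norm (df t) - s * wedge g dg t)
        = integral {0..2*pi} (\<lambda>t. cmod (df t - dg t)) + integral {0..2*pi} (\<lambda>t. norm (df t))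
          - integral {0..2*pi} (\<lambda>t. s * wedge g dg t)"
      using integral_diff[OF integrable_add[OF ndI ndfI] swgI] integral_add[OF ndI ndfI] by simp
    then show "integral {0..2*pi} (\<lambda>t. cmod (df t - dg t) + norm (df t) - s * wedge g dg t)
             = integral {0..2*pi} (\<lambda>t. cmod (df t - dg t)) - 2*pi*\<bar>real_of_int (d1 - d2)\<bar>"
      using ig intf sabs by simp
  qed
  show ?thesis
  proof (intro conjI impI allI)
    fix g dg
    assume "W11_S1 g dg \<and> deg g = of_int d2"
    then show "integral {0..2*pi} (\<lambda>t. cmod (df t - dg t)) \<ge> 2*pi*\<bar>real_of_int (d1 - d2)\<bar>"
      using lower by blast
  next
    fix g dg
    assume strict: "AE t in lborel. t \<in> {0..2*pi} \<longrightarrow> real_of_int d1 * wedge f df t > 0"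
      and gd: "W11_S1 g dg \<and> deg g = of_int d2"
    then have W: "W11_S1 g dg" and dg: "deg g = of_int d2" by auto
    show "integral {0..2*pi} (\<lambda>t. cmod (df t - dg t)) > 2*pi*\<bar>real_of_int (d1 - d2)\<bar>"
    proof (rule ccontr)
      assume "\<not> ?thesis"
      then have eq: "integral {0..2*pi} (\<lambda>t. cmod (df t - dg t)) = 2*pi*\<bar>real_of_int (d1 - d2)\<bar>"
        using lower[OF W dg] by linarith
      define H where "H = (\<lambda>t. cmod (df t - dg t) + norm (df t) - s * wedge g dg t)"
      have H0: "integral {0..2*pi} H = 0" unfolding H_def using Hint[OF W dg] eq by linarith
      have Hnn: "H t \<ge> 0" for t
      proof -
        have "norm (dg t) \<le> cmod (df t - dg t) + norm (df t)"
          using norm_triangle_ineq4[of "df t" "df t - dg t"] by (simp add: add.commute)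
        moreover have "\<bar>wedge g dg t\<bar> \<le> norm (dg t)" by (rule wedge_le_norm[of g t dg, OF W11_norm[OF W]])
        moreover have "s * wedge g dg t \<le> \<bar>wedge g dg t\<bar>" using s by auto
        ultimately show ?thesis by (simp add: H_def)
      qed
      have aeH: "AE t in lebesgue. t \<in> {0..2*pi} \<longrightarrow> H t = 0"
        by (rule integral_zero_AE[OF HI[OF W dg, folded H_def] Hnn H0])
      define L where "L = (\<lambda>t. norm (df t) - \<bar>wf t\<bar>)"
      have wfI: "(\<lambda>t. \<bar>wf t\<bar>) integrable_on {0..2*pi}"
        using Ff(3) by (simp add: wf_def absolutely_integrable_on_def)
      have LI: "L integrable_on {0..2*pi}" unfolding L_def using ndfI wfI by (rule integrable_diff)
      have L0: "integral {0..2*pi} L = 0"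
        unfolding L_def using ndfI wfI Ff(2) by (simp add: integral_diff wf_def)
      have Lnn: "L t \<ge> 0" for t
        using wedge_le_norm[of f t df, OF W11_norm[OF assms(2)]] by (simp add: L_def wf_def)
      have aeL: "AE t in lebesgue. t \<in> {0..2*pi} \<longrightarrow> L t = 0"
        by (rule integral_zero_AE[OF LI Lnn L0])
      have aeS: "AE t in lebesgue. t \<in> {0..2*pi} \<longrightarrow> s * wf t > 0"
        using AE_completion[OF strict] by eventually_elim (simp add: wf_def sign_conv[OF d1ne s_def])
      have aeE: "AE t in lebesgue. t \<in> {0..2*pi} \<longrightarrow> f (cis t) = g (cis t)"
        using aeH aeL aeS
      proof eventually_elim
        case (elim t)
        show ?case
        proof
          assume t: "t \<in> {0..2*pi}"
          have h: "H t = 0" "L t = 0" "s * wf t > 0" using elim t by auto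
          have a1: "norm (dg t) \<le> cmod (df t - dg t) + norm (df t)"
            using norm_triangle_ineq4[of "df t" "df t - dg t"] by (simp add: add.commute)
          have a2: "\<bar>wedge g dg t\<bar> \<le> norm (dg t)" by (rule wedge_le_norm[of g t dg, OF W11_norm[OF W]])
          have a3: "s * wedge g dg t \<le> \<bar>wedge g dg t\<bar>" using s by auto
          have e1: "cmod (df t - dg t) = norm (dg t) - norm (df t)"
            and e2: "norm (dg t) = \<bar>wedge g dg t\<bar>" and e3: "\<bar>wedge g dg t\<bar> = s * wedge g dg t"
            using h(1) a1 a2 a3 unfolding H_def by linarith+
          have e4: "norm (df t) = \<bar>wedge f df t\<bar>" using h(2) by (simp add: L_def wf_def)
          have e5: "s * wedge f df t > 0" using h(3) by (simp add: wf_def)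
          show "f (cis t) = g (cis t)"
            by (rule alg3[OF W11_norm[OF assms(2)] W11_norm[OF W] s e1 e2[unfolded wedge_def]
                  e3[unfolded wedge_def] e4[unfolded wedge_def] e5[unfolded wedge_def]])
        qed
      qed
      have fc: "continuous_on {0..2*pi} (\<lambda>t. f (cis t) - g (cis t))"
        by (rule continuous_on_diff[OF Ff(4) W11_facts(4)[OF W dg]])
      have clE: "closed {t \<in> {0..2*pi}. f (cis t) - g (cis t) = 0}"
        using fc by (intro continuous_closed_preimage_constant) auto
      have inner: "f (cis t) - g (cis t) = 0" if t: "t \<in> {0<..<2*pi}" for t
      proof -
        have "AE x \<in> {0<..<2*pi} in lebesgue. x \<in> {t \<in> {0..2*pi}. f (cis t) - g (cis t) = 0}"
          using aeE by eventually_elim auto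
        from mem_closed_if_AE_lebesgue_open[OF _ clE this t] show ?thesis by simp
      qed
      have all: "f (cis t) = g (cis t)" if t: "t \<in> {0..2*pi}" for t
      proof -
        have cl: "closure {0<..<2*pi} = {0..2*pi::real}" by simp
        have fc': "continuous_on (closure {0<..<2*pi}) (\<lambda>t. f (cis t) - g (cis t))" using fc cl by simp
        have t': "t \<in> closure {0<..<2*pi}" using t cl by simp
        have "f (cis t) - g (cis t) = 0"
          by (rule continuous_constant_on_closure[OF fc' inner t'])
        then show ?thesis by simp
      qed
      have "deg g = deg f" unfolding deg_def
      proof (rule winding_number_cong)
        fix t :: real assume "0 \<le> t" "t \<le> 1"
        then have "2*pi*t \<in> {0..2*pi}" by (auto simp: mult_le_cancel_left1)
        then show "g (cis (2*pi*t)) = f (cis (2*pi*t))" using all by simp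
      qed
      then have "d1 = d2" using dg assms(3) by simp
      then show False using d12 by simp
    qed
  qed
qed


end
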